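(* Let $\langle r_n\rangle_{n=1}^\infty$ be a sequence in $\mathbb{N}$ and let $U=\bigcup_{n=1}^\infty\mathcal{P}_n({}^{r_n}\mathbb{N})$. Then: (i) there is a family $\{B_\alpha:\alpha<2^\omega\}$ of infinite subsets of $U$ with $B_\alpha\cap B_\beta$ finite for all $\alpha<\beta<2^\omega$, such that for every $\alpha<2^\omega$ and every $L\in U$ there exist $L'\in B_\alpha$ and $a\in\mathbb{N}$ with $L'=L+a$; (ii) there is a family $\{B_\alpha:\alpha<\omega\}$ of pairwise disjoint infinite subsets of $U$ such that for every $\alpha<\omega$ and every $L\in U$ there exist $L'\in B_\alpha$ and $a\in\mathbb{N}$ with $L'=L+a$.
   Context: $\mathbb{N}=\{1,2,\dots\}$. For a set $X$ and $n\in\mathbb{N}$, $\mathcal{P}_n(X)$ is the set of subsets of $X$ of size $n$, and ${}^{m}X$ is the set of sequences of length $m$ in $X$ (functions $\{1,\dots,m\}\to X$). For $f\in{}^m\mathbb{N}$ and $a\in\mathbb{Z}$, $f+a$ is the function $t\mapsto f(t)+a$, and for $L\subseteq{}^m\mathbb{N}$, $L+a=\{f+a: f\in L\}$. *)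

theory Defs
  imports Main
begin

text \<open>Sequences of length m in N = {1,2,...}, represented as lists of length m
  with all entries positive (entry i of the list is the value at position i+1).\<close>
definition seqs :: "nat \<Rightarrow> nat list set" where
  "seqs m = {xs. length xs = m \<and> (\<forall>x\<in>set xs. 1 \<le> x)}"

definition Pn :: "nat \<Rightarrow> 'a set \<Rightarrow> 'a set set" where
  "Pn n X = {L. L \<subseteq> X \<and> finite L \<and> card L = n}"

definition shift_seq :: "nat list \<Rightarrow> nat \<Rightarrow> nat list" where
  "shift_seq f a = map (\<lambda>x. x + a) f"

definition shift_set :: "nat list set \<Rightarrow> nat \<Rightarrow> nat list set" where
  "shift_set L a = (\<lambda>f. shift_seq f a) ` L"

definition Ufam :: "(nat \<Rightarrow> nat) \<Rightarrow> nat list set set" where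
  "Ufam r = (\<Union>n\<in>{1..}. Pn n (seqs (r n)))"

end

theory Submission
  imports Defs "HOL-Library.Countable" "HOL-Library.Nat_Bijection" "HOL-Library.Infinite_Set"
begin

definition ent :: "nat list set \<Rightarrow> nat set" where
  "ent M = (\<Union>f\<in>M. set f)"

definition mn :: "nat list set \<Rightarrow> nat" where
  "mn M = Min (ent M)"

definition enc :: "nat list set \<Rightarrow> nat" where
  "enc M = set_encode (to_nat ` M)"

definition BB :: "(nat \<Rightarrow> nat) \<Rightarrow> nat set \<Rightarrow> nat list set set" where
  "BB r S = {shift_set M h | M h. M \<in> Ufam r \<and> mn M = 1 \<and> h \<in> S \<and> enc M \<le> h}"

lemma inj_shift_seq: "inj (\<lambda>f. shift_seq f c)"
  unfolding shift_seq_def by (rule inj_mapI) (auto simp: inj_def)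

lemma shift_set_U:
  assumes "M \<in> Ufam r" shows "shift_set M c \<in> Ufam r"
proof -
  from assms obtain n where n: "n \<ge> 1" "M \<subseteq> seqs (r n)" "finite M" "card M = n"
    unfolding Ufam_def Pn_def by auto
  have "card (shift_set M c) = n"
    unfolding shift_set_def using n inj_shift_seq
    by (metis card_image inj_on_subset subset_UNIV)
  moreover have "shift_set M c \<subseteq> seqs (r n)"
    using n(2) unfolding shift_set_def seqs_def shift_seq_def by fastforce
  moreover have "finite (shift_set M c)" using n(3) unfolding shift_set_def by simp
  ultimately show ?thesis using n(1) unfolding Ufam_def Pn_def by auto
qed

lemma ent_shift: "ent (shift_set M c) = (\<lambda>x. x + c) ` ent M"
  unfolding ent_def shift_set_def shift_seq_def by auto

lemma ent_U:
  assumes r: "\<forall>n\<ge>1. 1 \<le> r n" and M: "M \<in> Ufam r"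
  shows "finite (ent M) \<and> ent M \<noteq> {} \<and> (\<forall>x\<in>ent M. 1 \<le> x)"
proof -
  from M obtain n where n: "n \<ge> 1" "M \<subseteq> seqs (r n)" "finite M" "card M = n"
    unfolding Ufam_def Pn_def by auto
  have "M \<noteq> {}" using n by auto
  then obtain f where f: "f \<in> M" by auto
  have "length f = r n" using f n(2) unfolding seqs_def by auto
  then have "f \<noteq> []" using r n(1) by auto
  then have "ent M \<noteq> {}" using f unfolding ent_def by auto
  moreover have "finite (ent M)" using n(3) unfolding ent_def by auto
  moreover have "\<forall>x\<in>ent M. 1 \<le> x" using n(2) unfolding ent_def seqs_def by auto
  ultimately show ?thesis by auto
qed

lemma mn_shift:
  assumes r: "\<forall>n\<ge>1. 1 \<le> r n" and M: "M \<in> Ufam r"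
  shows "mn (shift_set M c) = mn M + c"
proof -
  have "mono (\<lambda>x::nat. x + c)" by (auto simp: mono_def)
  then show ?thesis
    unfolding mn_def ent_shift using ent_U[OF r M] mono_Min_commute by metis
qed

lemma shift_shift: "shift_set (shift_set M a) b = shift_set M (a + b)"
  unfolding shift_set_def shift_seq_def by (auto simp: image_image add.assoc comp_def)

lemma down:
  assumes r: "\<forall>n\<ge>1. 1 \<le> r n" and L: "L \<in> Ufam r"
  shows "\<exists>M c. M \<in> Ufam r \<and> mn M = 1 \<and> L = shift_set M c \<and> c + 1 = mn L"
proof -
  define c where "c = mn L - 1"
  have E: "finite (ent L)" "ent L \<noteq> {}" "\<forall>x\<in>ent L. 1 \<le> x" using ent_U[OF r L] by auto
  have mi: "mn L \<in> ent L" unfolding mn_def using E by simp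
  then have "mn L \<ge> 1" using E by blast
  then have c1: "c + 1 = mn L" unfolding c_def by simp
  have ge: "\<forall>x\<in>ent L. c + 1 \<le> x"
  proof
    fix x assume "x \<in> ent L"
    then have "mn L \<le> x" unfolding mn_def using E(1) by simp
    then show "c + 1 \<le> x" using c1 by simp
  qed
  define M where "M = (\<lambda>f. map (\<lambda>x. x - c) f) ` L"
  have inv: "shift_seq (map (\<lambda>x. x - c) f) c = f" if "f \<in> L" for f
  proof -
    have "\<forall>x\<in>set f. c + 1 \<le> x" using ge that unfolding ent_def by auto
    then show ?thesis unfolding shift_seq_def by (induct f) auto
  qed
  have LM: "L = shift_set M c"
    unfolding shift_set_def M_def image_image using inv by (auto simp: image_iff)
  have injL: "inj_on (\<lambda>f. map (\<lambda>x. x - c) f) L"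
    by (rule inj_on_inverseI[where g = "\<lambda>f. shift_seq f c"]) (use inv in auto)
  from L obtain n where n: "n \<ge> 1" "L \<subseteq> seqs (r n)" "finite L" "card L = n"
    unfolding Ufam_def Pn_def by auto
  have "M \<subseteq> seqs (r n)"
  proof
    fix g assume "g \<in> M"
    then obtain f where f: "f \<in> L" "g = map (\<lambda>x. x - c) f" unfolding M_def by auto
    have "\<forall>x\<in>set f. c + 1 \<le> x" using ge f unfolding ent_def by auto
    then show "g \<in> seqs (r n)" using f n(2) unfolding seqs_def by auto
  qed
  moreover have "finite M" "card M = n" using n injL unfolding M_def by (auto simp: card_image)
  ultimately have MU: "M \<in> Ufam r" using n(1) unfolding Ufam_def Pn_def by auto
  have "mn L = mn M + c" using LM mn_shift[OF r MU] by simp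
  then have "mn M = 1" using c1 by simp
  then show ?thesis using MU LM c1 by blast
qed

lemma enc_finite: "finite {M. finite M \<and> enc M \<le> b}"
proof -
  have inj1: "inj_on (\<lambda>M. to_nat ` M) X" for X :: "nat list set set"
    by (simp add: inj_on_def inj_image_eq_iff)
  have "inj_on enc {M. finite M \<and> enc M \<le> b}"
  proof (rule inj_onI)
    fix M N assume "M \<in> {M. finite M \<and> enc M \<le> b}" "N \<in> {M. finite M \<and> enc M \<le> b}" "enc M = enc N"
    then have "to_nat ` M = to_nat ` N" unfolding enc_def using set_encode_eq by auto
    then show "M = N" by (simp add: inj_image_eq_iff)
  qed
  moreover have "enc ` {M. finite M \<and> enc M \<le> b} \<subseteq> {..b}" by auto
  ultimately show ?thesis using finite_imageD finite_subset by blast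
qed

lemma U_nonempty:
  assumes r: "\<forall>n\<ge>1. 1 \<le> r n"
  shows "\<exists>M. M \<in> Ufam r \<and> mn M = 1"
proof -
  define M where "M = {replicate (r 1) (1::nat)}"
  have "M \<in> Ufam r" unfolding M_def Ufam_def Pn_def seqs_def by auto
  moreover have "ent M = {1}" unfolding M_def ent_def using r by auto
  ultimately show ?thesis unfolding mn_def by auto
qed

lemma BB_props:
  assumes r: "\<forall>n\<ge>1. 1 \<le> r n" and S: "infinite S"
  shows "BB r S \<subseteq> Ufam r" "infinite (BB r S)"
    "\<forall>L\<in>Ufam r. \<exists>L'\<in>BB r S. \<exists>a\<ge>1. L' = shift_set L a"
proof -
  show "BB r S \<subseteq> Ufam r" unfolding BB_def using shift_set_U by auto
next
  obtain M where M: "M \<in> Ufam r" "mn M = 1" using U_nonempty[OF r] by auto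
  define T where "T = {h \<in> S. enc M \<le> h}"
  have "infinite T"
  proof
    assume "finite T"
    have "S \<subseteq> T \<union> {..<enc M}" unfolding T_def by auto
    then show False using S \<open>finite T\<close> finite_subset by blast
  qed
  moreover have "inj_on (\<lambda>h. shift_set M h) T"
  proof (rule inj_onI)
    fix h h' assume "h \<in> T" "h' \<in> T" "shift_set M h = shift_set M h'"
    then have "mn M + h = mn M + h'" using mn_shift[OF r M(1)] by metis
    then show "h = h'" by simp
  qed
  moreover have "(\<lambda>h. shift_set M h) ` T \<subseteq> BB r S"
    unfolding BB_def T_def using M by auto
  ultimately show "infinite (BB r S)" using finite_imageD finite_subset by blast
next
  show "\<forall>L\<in>Ufam r. \<exists>L'\<in>BB r S. \<exists>a\<ge>1. L' = shift_set L a"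
  proof
    fix L assume L: "L \<in> Ufam r"
    obtain M c where M: "M \<in> Ufam r" "mn M = 1" "L = shift_set M c" "c + 1 = mn L"
      using down[OF r L] by blast
    obtain h where h: "h \<in> S" "h > enc M + mn L"
      using S by (meson infinite_nat_iff_unbounded)
    have "shift_set M h \<in> BB r S" unfolding BB_def using M h by force
    moreover have "shift_set M h = shift_set L (h - c)"
      using M(3,4) h(2) shift_shift[of M c "h - c"] by simp
    moreover have "h - c \<ge> 1" using h M(4) by simp
    ultimately show "\<exists>L'\<in>BB r S. \<exists>a\<ge>1. L' = shift_set L a" by blast
  qed
qed

lemma BB_inter:
  assumes r: "\<forall>n\<ge>1. 1 \<le> r n" and F: "finite (S \<inter> S')"
  shows "finite (BB r S \<inter> BB r S')" and "S \<inter> S' = {} \<Longrightarrow> BB r S \<inter> BB r S' = {}"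
proof -
  have sub: "BB r S \<inter> BB r S' \<subseteq> (\<lambda>(M, h). shift_set M h) ` ({M. finite M \<and> enc M \<le> Max (S \<inter> S')} \<times> (S \<inter> S'))"
  proof
    fix L assume "L \<in> BB r S \<inter> BB r S'"
    then obtain M h M' h' where A: "L = shift_set M h" "M \<in> Ufam r" "mn M = 1" "h \<in> S" "enc M \<le> h"
      and B: "L = shift_set M' h'" "M' \<in> Ufam r" "mn M' = 1" "h' \<in> S'"
      unfolding BB_def by blast
    have "mn L = 1 + h" using A mn_shift[OF r A(2)] by simp
    moreover have "mn L = 1 + h'" using B mn_shift[OF r B(2)] by simp
    ultimately have hh: "h \<in> S \<inter> S'" using A B by simp
    then have "h \<le> Max (S \<inter> S')" using F by simp
    moreover have "finite M" using A(2) unfolding Ufam_def Pn_def by auto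
    ultimately show "L \<in> (\<lambda>(M, h). shift_set M h) ` ({M. finite M \<and> enc M \<le> Max (S \<inter> S')} \<times> (S \<inter> S'))"
      using A hh by force
  qed
  show "finite (BB r S \<inter> BB r S')"
    by (rule finite_subset[OF sub]) (use F enc_finite in auto)
  show "S \<inter> S' = {} \<Longrightarrow> BB r S \<inter> BB r S' = {}" using sub by auto
qed

definition SA :: "nat set \<Rightarrow> nat set" where
  "SA A = range (\<lambda>n. prod_encode (n, set_encode (A \<inter> {..<n})))"

definition SK :: "nat \<Rightarrow> nat set" where
  "SK k = range (\<lambda>j. prod_encode (k, j))"

lemma SA_inf: "infinite (SA A)"
  unfolding SA_def by (rule range_inj_infinite) (auto simp: inj_def)

lemma SK_inf: "infinite (SK k)"
  unfolding SK_def by (rule range_inj_infinite) (auto simp: inj_def)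

lemma SK_disj: "k \<noteq> k' \<Longrightarrow> SK k \<inter> SK k' = {}"
  unfolding SK_def by auto

lemma SA_ad:
  assumes "A \<noteq> B" shows "finite (SA A \<inter> SA B)"
proof -
  obtain m where m: "(m \<in> A) \<noteq> (m \<in> B)" using assms by blast
  have "SA A \<inter> SA B \<subseteq> (\<lambda>n. prod_encode (n, set_encode (A \<inter> {..<n}))) ` {..m}"
  proof
    fix x assume "x \<in> SA A \<inter> SA B"
    then obtain n n' where x: "x = prod_encode (n, set_encode (A \<inter> {..<n}))"
      "x = prod_encode (n', set_encode (B \<inter> {..<n'}))" unfolding SA_def by auto
    then have "n = n'" "set_encode (A \<inter> {..<n}) = set_encode (B \<inter> {..<n})" by auto
    then have eq: "A \<inter> {..<n} = B \<inter> {..<n}" using set_encode_eq by auto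
    have "n \<le> m"
    proof (rule ccontr)
      assume "\<not> n \<le> m"
      then have "m \<in> {..<n}" by auto
      then show False using eq m by blast
    qed
    then show "x \<in> (\<lambda>n. prod_encode (n, set_encode (A \<inter> {..<n}))) ` {..m}" using x by auto
  qed
  then show ?thesis using finite_subset by blast
qed

theorem lemma3p1:
  fixes r :: "nat \<Rightarrow> nat"
  assumes "\<forall>n\<ge>1. 1 \<le> r n"
  shows "(\<exists>B :: nat set \<Rightarrow> nat list set set.
            (\<forall>\<alpha>. B \<alpha> \<subseteq> Ufam r \<and> infinite (B \<alpha>)) \<and>
            (\<forall>\<alpha> \<beta>. \<alpha> \<noteq> \<beta> \<longrightarrow> finite (B \<alpha> \<inter> B \<beta>)) \<and>
            (\<forall>\<alpha>. \<forall>L\<in>Ufam r. \<exists>L'\<in>B \<alpha>. \<exists>a\<ge>1. L' = shift_set L a))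
       \<and> (\<exists>B :: nat \<Rightarrow> nat list set set.
            (\<forall>\<alpha>. B \<alpha> \<subseteq> Ufam r \<and> infinite (B \<alpha>)) \<and>
            (\<forall>\<alpha> \<beta>. \<alpha> \<noteq> \<beta> \<longrightarrow> B \<alpha> \<inter> B \<beta> = {}) \<and>
            (\<forall>\<alpha>. \<forall>L\<in>Ufam r. \<exists>L'\<in>B \<alpha>. \<exists>a\<ge>1. L' = shift_set L a))"
proof
  show "\<exists>B :: nat set \<Rightarrow> nat list set set.
            (\<forall>\<alpha>. B \<alpha> \<subseteq> Ufam r \<and> infinite (B \<alpha>)) \<and>
            (\<forall>\<alpha> \<beta>. \<alpha> \<noteq> \<beta> \<longrightarrow> finite (B \<alpha> \<inter> B \<beta>)) \<and>
            (\<forall>\<alpha>. \<forall>L\<in>Ufam r. \<exists>L'\<in>B \<alpha>. \<exists>a\<ge>1. L' = shift_set L a)"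
  proof (rule exI[where x = "\<lambda>A. BB r (SA A)"], intro conjI allI impI)
    fix A show "BB r (SA A) \<subseteq> Ufam r" by (rule BB_props(1)[OF assms SA_inf])
    show "infinite (BB r (SA A))" by (rule BB_props(2)[OF assms SA_inf])
    show "\<forall>L\<in>Ufam r. \<exists>L'\<in>BB r (SA A). \<exists>a\<ge>1. L' = shift_set L a"
      by (rule BB_props(3)[OF assms SA_inf])
  next
    fix A B :: "nat set" assume "A \<noteq> B"
    then show "finite (BB r (SA A) \<inter> BB r (SA B))" by (rule BB_inter(1)[OF assms SA_ad])
  qed
  show "\<exists>B :: nat \<Rightarrow> nat list set set.
            (\<forall>\<alpha>. B \<alpha> \<subseteq> Ufam r \<and> infinite (B \<alpha>)) \<and>
            (\<forall>\<alpha> \<beta>. \<alpha> \<noteq> \<beta> \<longrightarrow> B \<alpha> \<inter> B \<beta> = {}) \<and>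
            (\<forall>\<alpha>. \<forall>L\<in>Ufam r. \<exists>L'\<in>B \<alpha>. \<exists>a\<ge>1. L' = shift_set L a)"
  proof (rule exI[where x = "\<lambda>k. BB r (SK k)"], intro conjI allI impI)
    fix A show "BB r (SK A) \<subseteq> Ufam r" by (rule BB_props(1)[OF assms SK_inf])
    show "infinite (BB r (SK A))" by (rule BB_props(2)[OF assms SK_inf])
    show "\<forall>L\<in>Ufam r. \<exists>L'\<in>BB r (SK A). \<exists>a\<ge>1. L' = shift_set L a"
      by (rule BB_props(3)[OF assms SK_inf])
  next
    fix A B :: nat assume "A \<noteq> B"
    then have d: "SK A \<inter> SK B = {}" by (rule SK_disj)
    then have "finite (SK A \<inter> SK B)" by simp
    from BB_inter(2)[OF assms this d]
    show "BB r (SK A) \<inter> BB r (SK B) = {}" .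
  qed
qed

end
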